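(* Consider the two-good panel bundle model described in the context and suppose Assumptions 1–3 hold. Then for any $(x_s,x_t,z)$ and any $s\neq t$: (1) for each $j\in\mathcal C$: if $P_s(\{j\}\mid x_s,x_t,z)>P_t(\{j\}\mid x_s,x_t,z)$, then there exists $k\in\mathcal C$, $k\neq j$, with $\Delta_{s,t}\delta_j>\Delta_{s,t}\delta_k$; (2) for each $\ell\in\{A,B\}$, with $\ell_{-1}$ the other good: if $P_s(\{\ell,AB\}\mid x_s,x_t,z)>P_t(\{\ell,AB\}\mid x_s,x_t,z)$, then either $\Delta_{s,t}\delta_\ell>0$, or both $\Delta_{s,t}(\delta_\ell+\operatorname{sign}(\Gamma(z))\delta_{\ell_{-1}})>0$ and $|\Gamma(z)|>-\Delta_{s,t}\delta_\ell$ (or both alternatives hold); (3) if $P_s(\{AB\}\mid x_s,x_t,z)+P_t(\{O\}\mid x_s,x_t,z)>1$, then $\Gamma(z)>-\min\{\Delta_{s,t}\delta_A,\Delta_{s,t}\delta_B\}$ and $\Delta_{s,t}(\delta_A+\delta_B)>0$; and if $P_s(\{A\}\mid x_s,x_t,z)+P_t(\{B\}\mid x_s,x_t,z)>1$, then $\Gamma(z)<\min\{\Delta_{s,t}\delta_A,-\Delta_{s,t}\delta_B\}$ and $\Delta_{s,t}(\delta_A-\delta_B)>0$.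
   Context: Panel multinomial choice model with bundles: consumers $i$, periods $t=1,\dots,T$ with $T\ge 2$ fixed; two goods $A,B$ and choice set $\mathcal C=\{A,B,AB,O\}$ ($A$ = only good $A$, $B$ = only good $B$, $AB$ = both goods, $O$ = outside option). Utilities: $u_{iAt}=X_{iAt}'\beta_0+\alpha_{iA}+\epsilon_{iAt}$, $u_{iBt}=X_{iBt}'\beta_0+\alpha_{iB}+\epsilon_{iBt}$, $u_{iABt}=u_{iAt}+u_{iBt}+\Gamma_{it}$, $u_{iOt}=0$, with $X_{ijt}\in\mathbb R^{d_x}$ observed, $\alpha_{ij}\in\mathbb R$ unobserved time-invariant fixed effects, $\epsilon_{ijt}\in\mathbb R$ unobserved shocks, $\beta_0\in\mathbb R^{d_x}$ unknown. The observed choice $Y_{it}\in\mathcal C$ maximizes utility; ties occur with probability zero. $X_{it}=(X_{iAt},X_{iBt})$, $\alpha_i=(\alpha_{iA},\alpha_{iB})$, $\epsilon_{it}=(\epsilon_{iAt},\epsilon_{iBt})$. Assumption 1: $\Gamma_{it}=\Gamma(Z_i)$, $Z_i\in\mathbb R^{d_z}$ observed and time-invariant, $\Gamma$ possibly unknown. Assumption 2: at least one component of $X_{it}$ is not in $Z_i$ and has nonzero coefficient. Assumption 3: for all $s,t\le T$, $\epsilon_{is}\mid(X_{is},X_{it},Z_i,\alpha_i)$ and $\epsilon_{it}\mid(X_{is},X_{it},Z_i,\alpha_i)$ have the same distribution. Notation: $P_t(K\mid x_s,x_t,z)=\Pr(Y_{it}\in K\mid X_{is}=x_s,X_{it}=x_t,Z_i=z)$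 for $K\subset\mathcal C$. Given $X_{i\ell t}=x_{\ell t}$: $\delta_{\ell t}=x_{\ell t}'\beta_0$ for $\ell\in\{A,B\}$, $\delta_{ABt}=\delta_{At}+\delta_{Bt}$, $\delta_{Ot}=0$, and $\Delta_{s,t}\delta_j=\delta_{js}-\delta_{jt}$. $\operatorname{sign}(x)=\mathbb 1\{x>0\}-\mathbb 1\{x<0\}$. *)

theory Defs
  imports "HOL-Probability.Probability"
begin

datatype alt = GA | GB | GAB | GO

fun delta :: "alt \<Rightarrow> real \<Rightarrow> real \<Rightarrow> real" where
  "delta GA dA dB = dA"
| "delta GB dA dB = dB"
| "delta GAB dA dB = dA + dB"
| "delta GO dA dB = 0"

text \<open>Utility of alternative j in a period, given delta_A, delta_B, the fixed effects
  (aA,aB), the shocks (eA,eB) and the bundle term g = Gamma(z).\<close>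
fun util :: "alt \<Rightarrow> real \<Rightarrow> real \<Rightarrow> real \<times> real \<Rightarrow> real \<times> real \<Rightarrow> real \<Rightarrow> real" where
  "util GA dA dB a e g = dA + fst a + fst e"
| "util GB dA dB a e g = dB + snd a + snd e"
| "util GAB dA dB a e g = (dA + fst a + fst e) + (dB + snd a + snd e) + g"
| "util GO dA dB a e g = 0"

fun other_good :: "alt \<Rightarrow> alt" where
  "other_good GA = GB"
| "other_good GB = GA"
| "other_good j = j"

end

theory Submission
  imports Defs
begin

lemma alt_UNIV: "(UNIV :: alt set) = {GA, GB, GAB, GO}"
  using alt.exhaust by auto

lemma all_alt: "(\<forall>k::alt. P k) = (P GA \<and> P GB \<and> P GAB \<and> P GO)"
  by (metis alt.exhaust)

lemma util_split: "util j dA dB a e g = delta j dA dB + util j 0 0 a e g"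
  by (cases j) auto

definition Wset :: "alt set \<Rightarrow> real \<Rightarrow> real \<Rightarrow> real \<Rightarrow> ((real \<times> real) \<times> (real \<times> real)) set" where
  "Wset K dA dB g = {p. \<forall>k. k \<notin> K \<longrightarrow> (\<exists>j\<in>K. util k dA dB (fst p) (snd p) g < util j dA dB (fst p) (snd p) g)}"

lemma Lt_borel: "{p :: (real \<times> real) \<times> (real \<times> real). util k dA dB (fst p) (snd p) g < util j dA dB (fst p) (snd p) g} \<in> sets borel"
  apply (rule borel_open, rule open_Collect_less)
   apply (cases k) apply (simp_all add: continuous_intros)
  apply (cases j) apply (simp_all add: continuous_intros)
  done

lemma Wset_borel: "Wset K dA dB g \<in> sets borel"
proof -
  have "Wset K dA dB g = (\<Inter>k\<in>-K. \<Union>j\<in>K. {p. util k dA dB (fst p) (snd p) g < util j dA dB (fst p) (snd p) g})"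
    unfolding Wset_def by auto
  moreover have "finite (-K)" "finite K" using finite_subset[of _ "UNIV::alt set"] alt_UNIV by (metis finite.emptyI finite.insertI subset_UNIV)+
  ultimately show ?thesis
    using Lt_borel by (cases "-K = {}") (auto intro!: sets.finite_INT sets.finite_UN simp del: Compl_iff)
qed

lemma incl1:
  assumes "\<forall>k. k \<noteq> j \<longrightarrow> delta j dAs dBs - delta j dAt dBt \<le> delta k dAs dBs - delta k dAt dBt"
  shows "Wset {j} dAs dBs g \<subseteq> Wset {j} dAt dBt g"
proof
  fix p assume p: "p \<in> Wset {j} dAs dBs g"
  show "p \<in> Wset {j} dAt dBt g" unfolding Wset_def
  proof (intro CollectI allI impI)
    fix k assume k: "k \<notin> {j}"
    then have "util k dAs dBs (fst p) (snd p) g < util j dAs dBs (fst p) (snd p) g" using p unfolding Wset_def by auto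
    then show "\<exists>j'\<in>{j}. util k dAt dBt (fst p) (snd p) g < util j' dAt dBt (fst p) (snd p) g"
      using assms k util_split[of k] util_split[of j] by (smt (verit) singletonI)
  qed
qed

lemma incl2A:
  assumes "\<not> (dAs - dAt > 0 \<or> ((dAs - dAt) + sgn g * (dBs - dBt) > 0 \<and> \<bar>g\<bar> > - (dAs - dAt)))"
  shows "Wset {GA, GAB} dAs dBs g \<subseteq> Wset {GA, GAB} dAt dBt g"
  using assms unfolding Wset_def all_alt
  by (auto simp: sgn_if split: if_splits; smt (verit))

lemma incl2B:
  assumes "\<not> (dBs - dBt > 0 \<or> ((dBs - dBt) + sgn g * (dAs - dAt) > 0 \<and> \<bar>g\<bar> > - (dBs - dBt)))"
  shows "Wset {GB, GAB} dAs dBs g \<subseteq> Wset {GB, GAB} dAt dBt g"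
  using assms unfolding Wset_def all_alt
  by (auto simp: sgn_if split: if_splits; smt (verit))

lemma disj3a:
  assumes "\<not> (g > - min (dAs - dAt) (dBs - dBt) \<and> (dAs - dAt) + (dBs - dBt) > 0)"
  shows "Wset {GAB} dAs dBs g \<inter> Wset {GO} dAt dBt g = {}"
  using assms unfolding Wset_def all_alt
  by (auto simp: min_def split: if_splits; smt (verit))

lemma disj3b:
  assumes "\<not> (g < min (dAs - dAt) (- (dBs - dBt)) \<and> (dAs - dAt) - (dBs - dBt) > 0)"
  shows "Wset {GA} dAs dBs g \<inter> Wset {GB} dAt dBt g = {}"
  using assms unfolding Wset_def all_alt
  by (auto simp: min_def split: if_splits; smt (verit))

theorem proposition2:
  fixes M :: "'w measure"
    and T s t :: nat
    and beta0 xAs xBs xAt xBt :: "real ^ 'd"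
    and Gamma :: "'z \<Rightarrow> real" and z :: 'z
    and alpha eps_s eps_t :: "'w \<Rightarrow> real \<times> real"
    and Y_s Y_t :: "'w \<Rightarrow> alt"
  defines "dAs \<equiv> xAs \<bullet> beta0" and "dBs \<equiv> xBs \<bullet> beta0"
      and "dAt \<equiv> xAt \<bullet> beta0" and "dBt \<equiv> xBt \<bullet> beta0"
  defines "Dd \<equiv> (\<lambda>j. delta j dAs dBs - delta j dAt dBt)"
  defines "Ps \<equiv> (\<lambda>K. measure M {\<omega> \<in> space M. Y_s \<omega> \<in> K})"
      and "Pt \<equiv> (\<lambda>K. measure M {\<omega> \<in> space M. Y_t \<omega> \<in> K})"
  assumes T: "T \<ge> 2" and st: "s \<in> {1..T}" "t \<in> {1..T}" "s \<noteq> t"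
    and M: "prob_space M"
    and rv: "alpha \<in> borel_measurable M" "eps_s \<in> borel_measurable M" "eps_t \<in> borel_measurable M"
    and Ymeas: "Y_s \<in> measurable M (count_space UNIV)" "Y_t \<in> measurable M (count_space UNIV)"
    \<comment> \<open>utility maximisation, ties with probability zero (Assumption 1: Gamma_it = Gamma(z))\<close>
    and Ys_max: "AE \<omega> in M. \<forall>k. k \<noteq> Y_s \<omega> \<longrightarrow>
        util k dAs dBs (alpha \<omega>) (eps_s \<omega>) (Gamma z) < util (Y_s \<omega>) dAs dBs (alpha \<omega>) (eps_s \<omega>) (Gamma z)"
    and Yt_max: "AE \<omega> in M. \<forall>k. k \<noteq> Y_t \<omega> \<longrightarrow>
        util k dAt dBt (alpha \<omega>) (eps_t \<omega>) (Gamma z) < util (Y_t \<omega>) dAt dBt (alpha \<omega>) (eps_t \<omega>) (Gamma z)"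
    \<comment> \<open>Assumption 3 (conditional on X_s = x_s, X_t = x_t, Z = z)\<close>
    and A3: "distr M borel (\<lambda>\<omega>. (alpha \<omega>, eps_s \<omega>)) = distr M borel (\<lambda>\<omega>. (alpha \<omega>, eps_t \<omega>))"
  shows
    "(\<forall>j. Ps {j} > Pt {j} \<longrightarrow> (\<exists>k. k \<noteq> j \<and> Dd j > Dd k))
     \<and> (\<forall>l \<in> {GA, GB}. Ps {l, GAB} > Pt {l, GAB} \<longrightarrow>
          (Dd l > 0 \<or> (Dd l + sgn (Gamma z) * Dd (other_good l) > 0 \<and> \<bar>Gamma z\<bar> > - Dd l)))
     \<and> (Ps {GAB} + Pt {GO} > 1 \<longrightarrow> Gamma z > - min (Dd GA) (Dd GB) \<and> Dd GA + Dd GB > 0)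
     \<and> (Ps {GA} + Pt {GB} > 1 \<longrightarrow> Gamma z < min (Dd GA) (- Dd GB) \<and> Dd GA - Dd GB > 0)"
proof -
  interpret prob_space M by (rule M)
  define g where "g = Gamma z"
  define Xs where "Xs = (\<lambda>\<omega>. (alpha \<omega>, eps_s \<omega>))"
  define Xt where "Xt = (\<lambda>\<omega>. (alpha \<omega>, eps_t \<omega>))"
  have Xs: "Xs \<in> borel_measurable M" unfolding Xs_def using rv by measurable
  have Xt: "Xt \<in> borel_measurable M" unfolding Xt_def using rv by measurable
  have setX: "{\<omega> \<in> space M. X \<omega> \<in> S} \<in> sets M" if "X \<in> borel_measurable M" "S \<in> sets borel" for X S
  proof -
    have "{\<omega> \<in> space M. X \<omega> \<in> S} = X -` S \<inter> space M" by auto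
    then show ?thesis using measurable_sets[OF that] by simp
  qed
  have setY: "{\<omega> \<in> space M. Y \<omega> \<in> K} \<in> sets M" if "Y \<in> measurable M (count_space UNIV)" for Y :: "'w \<Rightarrow> alt" and K
  proof -
    have "{\<omega> \<in> space M. Y \<omega> \<in> K} = Y -` K \<inter> space M" by auto
    then show ?thesis using measurable_sets[OF that, of K] by simp
  qed
  have eqQ: "measure M {\<omega> \<in> space M. Xs \<omega> \<in> S} = measure M {\<omega> \<in> space M. Xt \<omega> \<in> S}"
    if "S \<in> sets borel" for S
  proof -
    have "measure M {\<omega> \<in> space M. Xs \<omega> \<in> S} = measure (distr M borel Xs) S"
      using measure_distr[OF Xs that] by (simp add: vimage_def Int_def conj_commute)
    also have "\<dots> = measure (distr M borel Xt) S" using A3 unfolding Xs_def Xt_def by simp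
    also have "\<dots> = measure M {\<omega> \<in> space M. Xt \<omega> \<in> S}"
      using measure_distr[OF Xt that] by (simp add: vimage_def Int_def conj_commute)
    finally show ?thesis .
  qed
  have upS: "Ps K \<le> measure M {\<omega> \<in> space M. Xs \<omega> \<in> Wset K dAs dBs g}" for K
    unfolding Ps_def
  proof (rule finite_measure_mono_AE)
    show "{\<omega> \<in> space M. Xs \<omega> \<in> Wset K dAs dBs g} \<in> sets M" by (rule setX[OF Xs Wset_borel])
    show "AE x in M. x \<in> {\<omega> \<in> space M. Y_s \<omega> \<in> K} \<longrightarrow> x \<in> {\<omega> \<in> space M. Xs \<omega> \<in> Wset K dAs dBs g}"
      using Ys_max
    proof (rule eventually_mono)
      fix \<omega> assume H: "\<forall>k. k \<noteq> Y_s \<omega> \<longrightarrow> util k dAs dBs (alpha \<omega>) (eps_s \<omega>) (Gamma z) < util (Y_s \<omega>) dAs dBs (alpha \<omega>) (eps_s \<omega>) (Gamma z)"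
      show "\<omega> \<in> {\<omega> \<in> space M. Y_s \<omega> \<in> K} \<longrightarrow> \<omega> \<in> {\<omega> \<in> space M. Xs \<omega> \<in> Wset K dAs dBs g}"
      proof (intro impI)
        assume w: "\<omega> \<in> {\<omega> \<in> space M. Y_s \<omega> \<in> K}"
        have "\<exists>j\<in>K. util k dAs dBs (alpha \<omega>) (eps_s \<omega>) (Gamma z) < util j dAs dBs (alpha \<omega>) (eps_s \<omega>) (Gamma z)"
          if "k \<notin> K" for k
        proof
          show "Y_s \<omega> \<in> K" using w by simp
          show "util k dAs dBs (alpha \<omega>) (eps_s \<omega>) (Gamma z) < util (Y_s \<omega>) dAs dBs (alpha \<omega>) (eps_s \<omega>) (Gamma z)"
          proof -
            have "k \<noteq> Y_s \<omega>" using that w by auto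
            then show ?thesis using H by blast
          qed
        qed
        then show "\<omega> \<in> {\<omega> \<in> space M. Xs \<omega> \<in> Wset K dAs dBs g}"
          using w unfolding Wset_def Xs_def g_def by simp
      qed
    qed
  qed
  have upT: "Pt K \<le> measure M {\<omega> \<in> space M. Xt \<omega> \<in> Wset K dAt dBt g}" for K
    unfolding Pt_def
  proof (rule finite_measure_mono_AE)
    show "{\<omega> \<in> space M. Xt \<omega> \<in> Wset K dAt dBt g} \<in> sets M" by (rule setX[OF Xt Wset_borel])
    show "AE x in M. x \<in> {\<omega> \<in> space M. Y_t \<omega> \<in> K} \<longrightarrow> x \<in> {\<omega> \<in> space M. Xt \<omega> \<in> Wset K dAt dBt g}"
      using Yt_max
    proof (rule eventually_mono)
      fix \<omega> assume H: "\<forall>k. k \<noteq> Y_t \<omega> \<longrightarrow> util k dAt dBt (alpha \<omega>) (eps_t \<omega>) (Gamma z) < util (Y_t \<omega>) dAt dBt (alpha \<omega>) (eps_t \<omega>) (Gamma z)"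
      show "\<omega> \<in> {\<omega> \<in> space M. Y_t \<omega> \<in> K} \<longrightarrow> \<omega> \<in> {\<omega> \<in> space M. Xt \<omega> \<in> Wset K dAt dBt g}"
      proof (intro impI)
        assume w: "\<omega> \<in> {\<omega> \<in> space M. Y_t \<omega> \<in> K}"
        have "\<exists>j\<in>K. util k dAt dBt (alpha \<omega>) (eps_t \<omega>) (Gamma z) < util j dAt dBt (alpha \<omega>) (eps_t \<omega>) (Gamma z)"
          if "k \<notin> K" for k
        proof
          show "Y_t \<omega> \<in> K" using w by simp
          show "util k dAt dBt (alpha \<omega>) (eps_t \<omega>) (Gamma z) < util (Y_t \<omega>) dAt dBt (alpha \<omega>) (eps_t \<omega>) (Gamma z)"
          proof -
            have "k \<noteq> Y_t \<omega>" using that w by auto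
            then show ?thesis using H by blast
          qed
        qed
        then show "\<omega> \<in> {\<omega> \<in> space M. Xt \<omega> \<in> Wset K dAt dBt g}"
          using w unfolding Wset_def Xt_def g_def by simp
      qed
    qed
  qed
  have lowT: "measure M {\<omega> \<in> space M. Xt \<omega> \<in> Wset K dAt dBt g} \<le> Pt K" for K
    unfolding Pt_def
  proof (rule finite_measure_mono_AE)
    show "{\<omega> \<in> space M. Y_t \<omega> \<in> K} \<in> sets M" by (rule setY[OF Ymeas(2)])
    show "AE x in M. x \<in> {\<omega> \<in> space M. Xt \<omega> \<in> Wset K dAt dBt g} \<longrightarrow> x \<in> {\<omega> \<in> space M. Y_t \<omega> \<in> K}"
      using Yt_max
    proof (rule eventually_mono)
      fix \<omega> assume H: "\<forall>k. k \<noteq> Y_t \<omega> \<longrightarrow> util k dAt dBt (alpha \<omega>) (eps_t \<omega>) (Gamma z) < util (Y_t \<omega>) dAt dBt (alpha \<omega>) (eps_t \<omega>) (Gamma z)"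
      show "\<omega> \<in> {\<omega> \<in> space M. Xt \<omega> \<in> Wset K dAt dBt g} \<longrightarrow> \<omega> \<in> {\<omega> \<in> space M. Y_t \<omega> \<in> K}"
      proof (intro impI)
        assume w: "\<omega> \<in> {\<omega> \<in> space M. Xt \<omega> \<in> Wset K dAt dBt g}"
        show "\<omega> \<in> {\<omega> \<in> space M. Y_t \<omega> \<in> K}"
        proof (rule ccontr)
          assume "\<omega> \<notin> {\<omega> \<in> space M. Y_t \<omega> \<in> K}"
          then have "Y_t \<omega> \<notin> K" using w by auto
          then obtain j where "j \<in> K" and lt: "util (Y_t \<omega>) dAt dBt (alpha \<omega>) (eps_t \<omega>) (Gamma z) < util j dAt dBt (alpha \<omega>) (eps_t \<omega>) (Gamma z)"
            using w unfolding Wset_def Xt_def g_def by auto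
          then have "j \<noteq> Y_t \<omega>" using \<open>Y_t \<omega> \<notin> K\<close> by auto
          then show False using H lt by force
        qed
      qed
    qed
  qed
  have mono: "Ps K \<le> Pt K" if "Wset K dAs dBs g \<subseteq> Wset K dAt dBt g" for K
  proof -
    have "Ps K \<le> measure M {\<omega> \<in> space M. Xs \<omega> \<in> Wset K dAs dBs g}" by (rule upS)
    also have "\<dots> = measure M {\<omega> \<in> space M. Xt \<omega> \<in> Wset K dAs dBs g}" by (rule eqQ[OF Wset_borel])
    also have "\<dots> \<le> measure M {\<omega> \<in> space M. Xt \<omega> \<in> Wset K dAt dBt g}"
      by (rule finite_measure_mono) (use that setX[OF Xt Wset_borel] in auto)
    also have "\<dots> \<le> Pt K" by (rule lowT)
    finally show ?thesis .
  qed
  have disj: "Ps K1 + Pt K2 \<le> 1" if "Wset K1 dAs dBs g \<inter> Wset K2 dAt dBt g = {}" for K1 K2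
  proof -
    let ?A = "{\<omega> \<in> space M. Xs \<omega> \<in> Wset K1 dAs dBs g}"
    let ?B = "{\<omega> \<in> space M. Xs \<omega> \<in> Wset K2 dAt dBt g}"
    have A: "?A \<in> events" and B: "?B \<in> events" using setX[OF Xs Wset_borel] by auto
    have "Ps K1 + Pt K2 \<le> measure M ?A + measure M {\<omega> \<in> space M. Xt \<omega> \<in> Wset K2 dAt dBt g}"
      using upS upT by (simp add: add_mono)
    also have "\<dots> = measure M ?A + measure M ?B" using eqQ[OF Wset_borel] by simp
    also have "\<dots> = measure M (?A \<union> ?B)"
      by (rule finite_measure_Union[symmetric]) (use A B that in auto)
    also have "\<dots> \<le> 1" by simp
    finally show ?thesis .
  qed
  have DdA: "Dd GA = dAs - dAt" and DdB: "Dd GB = dBs - dBt" and DdO: "Dd GO = 0"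
    and DdAB: "Dd GAB = (dAs - dAt) + (dBs - dBt)"
    unfolding Dd_def by simp_all
  have P1: "\<forall>j. Ps {j} > Pt {j} \<longrightarrow> (\<exists>k. k \<noteq> j \<and> Dd j > Dd k)"
  proof (intro allI impI)
    fix j assume "Ps {j} > Pt {j}"
    then show "\<exists>k. k \<noteq> j \<and> Dd j > Dd k"
      using mono[OF incl1[of j dAs dBs dAt dBt g]] unfolding Dd_def by force
  qed
  have P2: "\<forall>l \<in> {GA, GB}. Ps {l, GAB} > Pt {l, GAB} \<longrightarrow>
          (Dd l > 0 \<or> (Dd l + sgn (Gamma z) * Dd (other_good l) > 0 \<and> \<bar>Gamma z\<bar> > - Dd l))"
  proof -
    have a: "Ps {GA, GAB} > Pt {GA, GAB} \<Longrightarrow> (Dd GA > 0 \<or> (Dd GA + sgn (Gamma z) * Dd GB > 0 \<and> \<bar>Gamma z\<bar> > - Dd GA))"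
      using mono[OF incl2A[of dAs dAt g dBs dBt]] unfolding DdA DdB g_def by linarith
    have b: "Ps {GB, GAB} > Pt {GB, GAB} \<Longrightarrow> (Dd GB > 0 \<or> (Dd GB + sgn (Gamma z) * Dd GA > 0 \<and> \<bar>Gamma z\<bar> > - Dd GB))"
      using mono[OF incl2B[of dBs dBt g dAs dAt]] unfolding DdA DdB g_def by linarith
    show ?thesis using a b by simp
  qed
  have P3: "Ps {GAB} + Pt {GO} > 1 \<longrightarrow> Gamma z > - min (Dd GA) (Dd GB) \<and> Dd GA + Dd GB > 0"
    using disj[OF disj3a[of dAs dAt dBs dBt g]] unfolding DdA DdB g_def by linarith
  have P4: "Ps {GA} + Pt {GB} > 1 \<longrightarrow> Gamma z < min (Dd GA) (- Dd GB) \<and> Dd GA - Dd GB > 0"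
    using disj[OF disj3b[of g dAs dAt dBs dBt]] unfolding DdA DdB g_def by linarith
  show ?thesis using P1 P2 P3 P4 by blast
qed

end
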